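(* Let $x,y\in(0,\infty)$ and $n,m\in\mathbb{N}$ be such that $\frac{x}{1+y}\le1$. Then: (i) $\displaystyle\prod_{i=m}^n\Big(1-\frac{x}{i+y}\Big)\le\Big(\frac{n+1+y}{m+y}\Big)^{-x}$; (ii) $\displaystyle\sum_{i=1}^n\frac{1}{(i+y)^2}\prod_{j=i+1}^n\Big(1-\frac{x}{j+y}\Big)\le\exp\Big(\frac{x}{1+y}\Big)\cdot\begin{cases}(n+1+y)^{-1}\frac{1}{x-1}, & x\in(1,\infty),\\ (n+1+y)^{-1}\big(1+\ln(n+y)\big), & x=1,\\ (n+1+y)^{-x}\frac{(1+y)^{x-2}(x-2-y)}{x-1}, & x\in[0,1).\end{cases}$
   Context: Empty products are equal to $1$. *)

theory Defs
  imports Complex_Main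
begin

end

theory Submission imports Defs begin

lemma mvt_pow:
  fixes a q :: real assumes "a > 0"
  shows "\<exists>c. a < c \<and> c < a + 1 \<and> (a+1) powr q - a powr q = q * c powr (q-1)"
proof -
  have "\<exists>z. a < z \<and> z < a + 1 \<and> ((a+1) powr q - a powr q = ((a+1) - a) * (q * z powr (q-1)))"
    by (rule MVT2) (use assms in \<open>auto intro!: has_real_derivative_powr\<close>)
  then show ?thesis by auto
qed

lemma step_inc:
  fixes a q :: real assumes "a > 0" "q \<ge> 1"
  shows "a powr (q-1) \<le> ((a+1) powr q - a powr q) / q"
proof -
  obtain c where c: "a < c" "c < a+1" "(a+1) powr q - a powr q = q * c powr (q-1)"
    using mvt_pow[OF assms(1)] by blast
  have "a powr (q-1) \<le> c powr (q-1)" using c assms by (intro powr_mono2) auto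
  then show ?thesis using c assms by simp
qed

lemma step_dec:
  fixes a q :: real assumes "a > 0" "q < 1" "q \<noteq> 0"
  shows "(a+1) powr (q-1) \<le> ((a+1) powr q - a powr q) / q"
proof -
  obtain c where c: "a < c" "c < a+1" "(a+1) powr q - a powr q = q * c powr (q-1)"
    using mvt_pow[OF assms(1)] by blast
  have "(a+1) powr (q-1) \<le> c powr (q-1)" using c assms by (intro powr_mono2') auto
  then show ?thesis using c assms by simp
qed

lemma step_ln:
  fixes a :: real assumes "a > 0"
  shows "1/(a+1) \<le> ln (a+1) - ln a"
proof -
  have "ln (a/(a+1)) \<le> a/(a+1) - 1" using assms by (intro ln_le_minus_one) auto
  moreover have "a/(a+1) - 1 = - 1/(a+1)" using assms by (simp add: field_simps)
  moreover have "ln (a/(a+1)) = ln a - ln (a+1)" using assms by (simp add: ln_div)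
  ultimately show ?thesis by simp
qed

lemma sum_inc:
  fixes q y :: real assumes "y > 0" "q \<ge> 1"
  shows "(\<Sum>i=1..n. (real i + y) powr (q-1)) \<le> ((real n + 1 + y) powr q - (1+y) powr q) / q"
proof (induction n)
  case 0 then show ?case by simp
next
  case (Suc n)
  have "(real n + 1 + y) powr (q-1) \<le> ((real n + 1 + y + 1) powr q - (real n + 1 + y) powr q) / q"
    using assms by (intro step_inc) auto
  then show ?case using Suc assms by (simp add: diff_divide_distrib add_ac)
qed

lemma sum_dec:
  fixes q y :: real assumes "y > 0" "q < 1" "q \<noteq> 0" "n \<ge> 1"
  shows "(\<Sum>i=1..n. (real i + y) powr (q-1)) \<le> (1+y) powr (q-1) + ((real n + y) powr q - (1+y) powr q) / q"
  using assms(4)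
proof (induction n rule: dec_induct)
  case base then show ?case by simp
next
  case (step n)
  have "(real n + y + 1) powr (q-1) \<le> ((real n + y + 1) powr q - (real n + y) powr q) / q"
    using assms by (intro step_dec) auto
  then show ?case using step assms by (simp add: diff_divide_distrib add_ac)
qed

lemma sum_ln:
  fixes y :: real assumes "y > 0" "n \<ge> 1"
  shows "(\<Sum>i=1..n. 1 / (real i + y)) \<le> 1/(1+y) + (ln (real n + y) - ln (1+y))"
  using assms(2)
proof (induction n rule: dec_induct)
  case base then show ?case by simp
next
  case (step n)
  have "1/(real n + y + 1) \<le> ln (real n + y + 1) - ln (real n + y)"
    using assms by (intro step_ln) auto
  then show ?case using step assms by (simp add: add_ac)
qed

lemma one_step:
  fixes x a :: real assumes "x > 0" "a > 0"
  shows "1 - x / a \<le> ((a + 1) / a) powr (- x)"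
proof -
  have "((a + 1) / a) powr (- x) = exp (- x * ln (1 + 1/a))"
    using assms by (simp add: powr_def field_simps)
  also have "\<dots> \<ge> 1 + (- x * ln (1 + 1/a))" by (rule exp_ge_add_one_self)
  finally have 1: "1 - x * ln (1 + 1/a) \<le> ((a + 1) / a) powr (- x)" by simp
  have "ln (1 + 1/a) \<le> 1/a" using assms by (intro ln_add_one_self_le_self) auto
  then have "x * ln (1 + 1/a) \<le> x * (1/a)" using assms by (intro mult_left_mono) auto
  then show ?thesis using 1 by simp
qed

lemma prod_bound:
  fixes x y :: real and m n :: nat
  assumes "x > 0" "y > 0" "m \<ge> 1" "x / (1 + y) \<le> 1" "m \<le> n + 1"
  shows "(\<Prod>i=m..n. 1 - x / (real i + y)) \<le> ((real n + 1 + y) / (real m + y)) powr (- x)"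
  using assms(5)
proof (induction n)
  case 0
  then have "m = 1" using assms by simp
  then show ?case using assms by simp
next
  case (Suc n)
  show ?case
  proof (cases "m = n + 2")
    case True
    then show ?thesis using assms by (simp add: add_ac)
  next
    case False
    then have mn: "m \<le> n + 1" using Suc by simp
    have IH: "(\<Prod>i=m..n. 1 - x / (real i + y)) \<le> ((real n + 1 + y) / (real m + y)) powr (- x)"
      using Suc mn by simp
    define a where "a = real n + 1 + y"
    have apos: "a > 0" using assms by (simp add: a_def)
    have "real m + y > 0" using assms by simp
    have "x / a \<le> x / (1 + y)" using assms unfolding a_def by (intro divide_left_mono) auto
    then have fac: "0 \<le> 1 - x / a" using assms(4) by linarith
    have "(\<Prod>i=m..Suc n. 1 - x / (real i + y)) = (\<Prod>i=m..n. 1 - x / (real i + y)) * (1 - x / a)"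
      using mn by (simp add: a_def add_ac)
    also have "\<dots> \<le> ((real n + 1 + y) / (real m + y)) powr (- x) * (1 - x / a)"
      using IH fac by (rule mult_right_mono)
    also have "\<dots> \<le> ((real n + 1 + y) / (real m + y)) powr (- x) * (((a + 1) / a) powr (- x))"
      using one_step[OF assms(1) apos] by (intro mult_left_mono) auto
    also have "\<dots> = (((real n + 1 + y) / (real m + y)) * ((a + 1) / a)) powr (- x)"
      using assms apos by (subst powr_mult) (auto simp: a_def)
    also have "((real n + 1 + y) / (real m + y)) * ((a + 1) / a) = (real (Suc n) + 1 + y) / (real m + y)"
    proof -
      have "(a / (real m + y)) * ((a + 1) / a) = (a + 1) / (real m + y)" using apos by simp
      moreover have "a + 1 = real (Suc n) + 1 + y" by (simp add: a_def)
      ultimately show ?thesis by (simp add: a_def)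
    qed
    finally show ?thesis .
  qed
qed

lemma term_bound:
  fixes x y :: real and i n :: nat
  assumes "x > 0" "y > 0" "i \<ge> 1" "x / (1 + y) \<le> 1" "i \<le> n"
  shows "(1 / (real i + y)^2) * (\<Prod>j=i+1..n. 1 - x / (real j + y))
     \<le> exp (x / (1 + y)) * (real n + 1 + y) powr (- x) * (real i + y) powr (x - 2)"
proof -
  define b where "b = real i + y"
  have bpos: "b > 0" using assms by (simp add: b_def)
  have b1: "b \<ge> 1 + y" using assms by (simp add: b_def)
  have "(\<Prod>j=i+1..n. 1 - x / (real j + y)) \<le> ((real n + 1 + y) / (real (i+1) + y)) powr (- x)"
    using assms by (intro prod_bound) auto
  also have "((real n + 1 + y) / (real (i+1) + y)) powr (- x) = (real n + 1 + y) powr (- x) * (b + 1) powr x"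
    unfolding powr_divide powr_minus using assms by (simp add: b_def add_ac divide_inverse)
  finally have P: "(\<Prod>j=i+1..n. 1 - x / (real j + y)) \<le> (real n + 1 + y) powr (- x) * (b + 1) powr x" .
  have "(b + 1) powr x = (b * (1 + 1/b)) powr x" using bpos by (simp add: distrib_left)
  also have "\<dots> = b powr x * (1 + 1/b) powr x"
  proof -
    have h: "0 \<le> 1 + 1/b" using bpos by simp
    show ?thesis by (rule powr_mult)
  qed
  also have "(1 + 1/b) powr x = exp (x * ln (1 + 1/b))"
  proof -
    have "1 + 1/b > 0" using bpos by (simp add: add_pos_pos)
    then show ?thesis by (simp add: powr_def)
  qed
  also have "\<dots> \<le> exp (x / (1 + y))"
  proof -
    have "ln (1 + 1/b) \<le> 1/b" using bpos by (intro ln_add_one_self_le_self) auto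
    also have "1/b \<le> 1/(1+y)" using b1 assms by (intro divide_left_mono) auto
    finally have "x * ln (1 + 1/b) \<le> x * (1/(1+y))" using assms by (intro mult_left_mono) auto
    then show ?thesis by simp
  qed
  finally have B: "(b + 1) powr x \<le> b powr x * exp (x / (1 + y))"
    using bpos by (simp add: mult_left_mono)
  have "(1 / b^2) * (\<Prod>j=i+1..n. 1 - x / (real j + y)) \<le> (1 / b^2) * ((real n + 1 + y) powr (- x) * (b + 1) powr x)"
    using P by (intro mult_left_mono) auto
  also have "\<dots> \<le> (1 / b^2) * ((real n + 1 + y) powr (- x) * (b powr x * exp (x / (1 + y))))"
    using B by (intro mult_left_mono) auto
  also have "\<dots> = exp (x / (1 + y)) * (real n + 1 + y) powr (- x) * (b powr x / b powr 2)"
    using bpos by (simp add: powr_numeral)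
  also have "b powr x / b powr 2 = b powr (x - 2)" by (simp add: powr_diff)
  finally show ?thesis by (simp add: b_def)
qed

theorem lemmaA1:
  fixes x y :: real and n m :: nat
  assumes "x > 0" and "y > 0" and "n \<ge> 1" and "m \<ge> 1"
    and "x / (1 + y) \<le> 1"
  shows "((\<Prod>i=m..n. 1 - x / (real i + y)) \<le> ((real n + 1 + y) / (real m + y)) powr (- x)) \<and>
         ((\<Sum>i=1..n. (1 / (real i + y)^2) * (\<Prod>j=i+1..n. 1 - x / (real j + y)))
         \<le> exp (x / (1 + y)) *
            (if x > 1 then (real n + 1 + y) powr (-1) * (1 / (x - 1))
             else if x = 1 then (real n + 1 + y) powr (-1) * (1 + ln (real n + y))
             else (real n + 1 + y) powr (- x) * ((1 + y) powr (x - 2) * (x - 2 - y) / (x - 1))))"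
proof -
  let ?E = "exp (x / (1 + y))"
  let ?N = "real n + 1 + y"
  let ?S = "\<Sum>i=1..n. (real i + y) powr (x - 2)"
  have Npos: "?N > 0" using assms by simp
  have part1: "(\<Prod>i=m..n. 1 - x / (real i + y)) \<le> ((real n + 1 + y) / (real m + y)) powr (- x)"
  proof (cases "m \<le> n + 1")
    case True
    then show ?thesis using assms by (intro prod_bound) auto
  next
    case False
    then have "(\<Prod>i=m..n. 1 - x / (real i + y)) = 1" by simp
    moreover have "((real n + 1 + y) / (real m + y)) powr (- x) \<ge> 1"
    proof -
      have le: "(real n + 1 + y) / (real m + y) \<le> 1" using False assms by simp
      have pos: "(real n + 1 + y) / (real m + y) > 0" using assms by simp
      have "((real n + 1 + y) / (real m + y)) powr (- x) \<ge> 1 powr (- x)"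
        using le pos assms by (intro powr_mono2') auto
      then show ?thesis by simp
    qed
    ultimately show ?thesis by simp
  qed
  have L: "(\<Sum>i=1..n. (1 / (real i + y)^2) * (\<Prod>j=i+1..n. 1 - x / (real j + y))) \<le> ?E * ?N powr (- x) * ?S"
  proof -
    have "(\<Sum>i=1..n. (1 / (real i + y)^2) * (\<Prod>j=i+1..n. 1 - x / (real j + y)))
        \<le> (\<Sum>i=1..n. ?E * ?N powr (- x) * (real i + y) powr (x - 2))"
      using assms by (intro sum_mono term_bound) auto
    also have "\<dots> = ?E * ?N powr (- x) * ?S" by (simp add: sum_distrib_left)
    finally show ?thesis .
  qed
  have EN: "?E * ?N powr (- x) \<ge> 0" by simp
  have part2: "?E * ?N powr (- x) * ?S \<le> ?E *
            (if x > 1 then (real n + 1 + y) powr (-1) * (1 / (x - 1))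
             else if x = 1 then (real n + 1 + y) powr (-1) * (1 + ln (real n + y))
             else (real n + 1 + y) powr (- x) * ((1 + y) powr (x - 2) * (x - 2 - y) / (x - 1)))"
  proof (cases "x > 1")
    case True
    have S: "?S \<le> ?N powr (x - 1) / (x - 1)"
    proof (cases "x \<ge> 2")
      case True
      have "?S = (\<Sum>i=1..n. (real i + y) powr ((x - 1) - 1))" by simp
      also have "\<dots> \<le> (?N powr (x - 1) - (1+y) powr (x - 1)) / (x - 1)"
        using assms True by (intro sum_inc) auto
      also have "\<dots> \<le> ?N powr (x - 1) / (x - 1)" using True by (intro divide_right_mono) auto
      finally show ?thesis .
    next
      case False
      have "?S = (\<Sum>i=1..n. (real i + y) powr ((x - 1) - 1))" by simp
      also have "\<dots> \<le> (1+y) powr ((x-1) - 1) + ((real n + y) powr (x - 1) - (1+y) powr (x - 1)) / (x - 1)"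
        using assms True False by (intro sum_dec) auto
      also have "\<dots> \<le> ?N powr (x - 1) / (x - 1)"
      proof -
        have "(1+y) powr (x - 1) = (1+y) powr (((x-1) - 1) + 1)" by simp
        also have "\<dots> = (1+y) powr ((x-1) - 1) * (1+y) powr 1" by (rule powr_add)
        also have "\<dots> = (1+y) powr ((x-1) - 1) * (1 + y)" using assms by simp
        finally have e: "(1+y) powr (x - 1) = (1+y) powr ((x-1) - 1) * (1 + y)" .
        have p: "(1+y) powr ((x-1) - 1) > 0" using assms by simp
        have "(1+y) powr ((x-1) - 1) * (x - 1) \<le> (1+y) powr ((x-1) - 1) * (1 + y)"
          using p False assms by (intro mult_left_mono) auto
        moreover have "(real n + y) powr (x - 1) \<le> ?N powr (x - 1)"
          using assms True by (intro powr_mono2) auto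
        ultimately have "(x - 1) * (1+y) powr ((x-1) - 1) + (real n + y) powr (x - 1) - (1+y) powr (x - 1) \<le> ?N powr (x - 1)"
          using e by (simp add: algebra_simps)
        then have "((x - 1) * (1+y) powr ((x-1) - 1) + (real n + y) powr (x - 1) - (1+y) powr (x - 1)) / (x - 1) \<le> ?N powr (x - 1) / (x - 1)"
          using True by (intro divide_right_mono) auto
        moreover have "((x - 1) * (1+y) powr ((x-1) - 1) + (real n + y) powr (x - 1) - (1+y) powr (x - 1)) / (x - 1)
           = (1+y) powr ((x-1) - 1) + ((real n + y) powr (x - 1) - (1+y) powr (x - 1)) / (x - 1)"
          using True by (simp add: field_simps)
        ultimately show ?thesis by simp
      qed
      finally show ?thesis .
    qed
    have "?E * ?N powr (- x) * ?S \<le> ?E * ?N powr (- x) * (?N powr (x - 1) / (x - 1))"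
      using S EN by (rule mult_left_mono)
    also have "?N powr (- x) * ?N powr (x - 1) = ?N powr (-1)"
      by (simp add: powr_add[symmetric])
    then have "?E * ?N powr (- x) * (?N powr (x - 1) / (x - 1)) = ?E * (?N powr (-1) * (1 / (x - 1)))"
      by (simp add: field_simps)
    finally show ?thesis using True by simp
  next
    case notgt: False
    show ?thesis
    proof (cases "x = 1")
      case True
      have "?S = (\<Sum>i=1..n. 1 / (real i + y))"
        using True assms by (intro sum.cong) (auto simp: powr_minus_divide)
      also have "\<dots> \<le> 1/(1+y) + (ln (real n + y) - ln (1+y))"
        using assms by (intro sum_ln) auto
      also have "\<dots> \<le> 1 + ln (real n + y)"
      proof -
        have "1/(1+y) \<le> 1" using assms by simp
        moreover have "ln (1+y) \<ge> 0" using assms by simp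
        ultimately show ?thesis by simp
      qed
      finally have S: "?S \<le> 1 + ln (real n + y)" .
      have "?E * ?N powr (- x) * ?S \<le> ?E * ?N powr (- x) * (1 + ln (real n + y))"
        using S EN by (rule mult_left_mono)
      then show ?thesis using True by simp
    next
      case False
      then have x1: "x < 1" using notgt by simp
      have "?S = (\<Sum>i=1..n. (real i + y) powr ((x - 1) - 1))" by simp
      also have "\<dots> \<le> (1+y) powr ((x-1) - 1) + ((real n + y) powr (x - 1) - (1+y) powr (x - 1)) / (x - 1)"
        using assms x1 by (intro sum_dec) auto
      also have "\<dots> \<le> (1 + y) powr (x - 2) * (x - 2 - y) / (x - 1)"
      proof -
        have "(1+y) powr (x - 1) = (1+y) powr ((x - 2) + 1)" by simp
        also have "\<dots> = (1+y) powr (x - 2) * (1+y) powr 1" by (rule powr_add)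
        also have "\<dots> = (1+y) powr (x - 2) * (1 + y)" using assms by simp
        finally have e: "(1+y) powr (x - 1) = (1+y) powr (x - 2) * (1 + y)" .
        have "(real n + y) powr (x - 1) / (x - 1) \<le> 0"
          using x1 by (intro divide_nonneg_neg) auto
        then have "(1+y) powr ((x-1) - 1) + ((real n + y) powr (x - 1) - (1+y) powr (x - 1)) / (x - 1)
             \<le> (1+y) powr (x - 2) - (1+y) powr (x - 1) / (x - 1)"
          by (simp add: diff_divide_distrib)
        also have "\<dots> = (1 + y) powr (x - 2) * (x - 2 - y) / (x - 1)"
          using x1 e by (simp add: field_simps)
        finally show ?thesis .
      qed
      finally have S: "?S \<le> (1 + y) powr (x - 2) * (x - 2 - y) / (x - 1)" .
      have "?E * ?N powr (- x) * ?S \<le> ?E * ?N powr (- x) * ((1 + y) powr (x - 2) * (x - 2 - y) / (x - 1))"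
        using S EN by (rule mult_left_mono)
      then show ?thesis using notgt False by simp
    qed
  qed
  show ?thesis using part1 L part2 by linarith
qed

end
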